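(* Let $X$ be a real linear space, $T$ an infinite index set, and $f, f_t : X \to \overline{\mathbb{R}} := \mathbb{R}\cup\{\pm\infty\}$ ($t \in T$) convex proper functions. Let $M := \bigcap_{t\in T} \operatorname{dom} f_t$, $h:=\sup_{t\in T} f_t$, $\Delta_1 := \operatorname{dom} f\cap\operatorname{dom} h$, and define $$\sup(D) := \sup_{\lambda\in\mathbb{R}_+^{(T)}} \inf_{x\in M}\Big(f(x)+\sum_{t\in T}\lambda_t f_t(x)\Big),\qquad \sup(D_1) := \sup_{s\ge0}\inf_{x\in\Delta_1}\big(f(x)+s\,h(x)\big),$$ and $\inf(P):=\inf\{f(x): f_t(x)\le 0 \text{ for all } t\in T\}$. Then $$\sup(D)\le\sup(D_1)\le\inf(P).$$
   Context: $\operatorname{dom} g := \{x : g(x)<+\infty\}$; a proper function never takes the value $-\infty$ and has nonempty domain. $\mathbb{R}^{(T)}$ is the space of functions $\lambda=(\lambda_t)_{t\in T}:T\to\mathbb{R}$ with finite support $\operatorname{supp}\lambda=\{t:\lambda_t\neq0\}$, and $\mathbb{R}^{(T)}_+$ its elements with all $\lambda_t\ge0$; $\sum_{t\in T}\lambda_t f_t(x)$ means $\sum_{t\in\operatorname{supp}\lambda}\lambda_t f_t(x)$ if $\lambda\ne 0$ and $0$ if $\lambda=0$. Conventions: $\inf\emptyset=+\infty$, $\sup\emptyset=-\infty$. *)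

theory Defs
  imports "HOL-Analysis.Analysis"
begin

definition edom :: "('a \<Rightarrow> ereal) \<Rightarrow> 'a set" where
  "edom g = {x. g x < \<infinity>}"

definition proper_fun :: "('a \<Rightarrow> ereal) \<Rightarrow> bool" where
  "proper_fun g \<longleftrightarrow> (\<forall>x. g x \<noteq> -\<infinity>) \<and> edom g \<noteq> {}"

definition econvex :: "('a::real_vector \<Rightarrow> ereal) \<Rightarrow> bool" where
  "econvex g \<longleftrightarrow> convex {(x, r::real). g x \<le> ereal r}"

definition mults :: "'b set \<Rightarrow> ('b \<Rightarrow> real) set" where
  "mults T = {lam. finite {t. lam t \<noteq> 0} \<and> (\<forall>t. lam t \<ge> 0) \<and> (\<forall>t. t \<notin> T \<longrightarrow> lam t = 0)}"

end

theory Submission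
  imports Defs
begin

theorem lemma3p1:
  fixes f :: "'a::real_vector \<Rightarrow> ereal"
    and ft :: "'b \<Rightarrow> 'a \<Rightarrow> ereal"
    and T :: "'b set"
  assumes "infinite T"
    and "econvex f" and "proper_fun f"
    and "\<And>t. t \<in> T \<Longrightarrow> econvex (ft t) \<and> proper_fun (ft t)"
  defines "M \<equiv> (\<Inter>t\<in>T. edom (ft t))"
    and "h \<equiv> (\<lambda>x. SUP t\<in>T. ft t x)"
  defines "\<Delta>1 \<equiv> edom f \<inter> edom h"
  defines "supD \<equiv> (SUP lam\<in>mults T. INF x\<in>M.
              f x + (\<Sum>t\<in>{t. lam t \<noteq> 0}. ereal (lam t) * ft t x))"
    and "supD1 \<equiv> (SUP s\<in>{0::real..}. INF x\<in>\<Delta>1. f x + ereal s * h x)"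
    and "infP \<equiv> (INF x\<in>{x. \<forall>t\<in>T. ft t x \<le> 0}. f x)"
  shows "supD \<le> supD1 \<and> supD1 \<le> infP"
proof
  have Tne: "T \<noteq> {}" using assms(1) by auto
  then obtain t0 where t0: "t0 \<in> T" by auto
  have ftne: "\<And>t x. t \<in> T \<Longrightarrow> ft t x \<noteq> -\<infinity>" using assms(4) unfolding proper_fun_def by blast
  have fne: "\<And>x. f x \<noteq> -\<infinity>" using assms(3) unfolding proper_fun_def by blast
  have fth: "\<And>t x. t \<in> T \<Longrightarrow> ft t x \<le> h x" unfolding h_def by (rule SUP_upper)
  have hne: "\<And>x. h x \<noteq> -\<infinity>"
    using fth[OF t0] ftne[OF t0] by (metis MInfty_eq_minfinity ereal_infty_less_eq(2))
  show "supD \<le> supD1"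
    unfolding supD_def
  proof (rule SUP_least)
    fix lam assume lam: "lam \<in> mults T"
    define S where "S = {t. lam t \<noteq> 0}"
    have finS: "finite S" and lpos: "\<And>t. lam t \<ge> 0" and ST: "S \<subseteq> T"
      using lam unfolding mults_def S_def by auto
    define s where "s = (\<Sum>t\<in>S. lam t)"
    have s0: "s \<in> {0..}" unfolding s_def using lpos by (simp add: sum_nonneg)
    have sub: "\<Delta>1 \<subseteq> M"
    proof
      fix x assume "x \<in> \<Delta>1"
      then have "h x < \<infinity>" unfolding \<Delta>1_def edom_def by auto
      then show "x \<in> M" unfolding M_def edom_def using fth by (metis (mono_tags, lifting) INT_I mem_Collect_eq le_less_trans)
    qed
    have key: "f x + (\<Sum>t\<in>S. ereal (lam t) * ft t x) \<le> f x + ereal s * h x" if x: "x \<in> \<Delta>1" for x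
    proof -
      have "h x < \<infinity>" using x unfolding \<Delta>1_def edom_def by auto
      then obtain r where r: "h x = ereal r" using hne[of x] by (cases "h x") auto
      have "(\<Sum>t\<in>S. ereal (lam t) * ft t x) \<le> (\<Sum>t\<in>S. ereal (lam t) * h x)"
        apply (rule sum_mono)
        apply (rule ereal_mult_left_mono)
        using fth ST lpos by auto
      also have "\<dots> = ereal s * h x"
        unfolding r s_def by (simp add: sum_distrib_right)
      finally show ?thesis by (rule add_left_mono)
    qed
    have "(INF x\<in>M. f x + (\<Sum>t\<in>S. ereal (lam t) * ft t x))
        \<le> (INF x\<in>\<Delta>1. f x + (\<Sum>t\<in>S. ereal (lam t) * ft t x))"
      by (rule INF_superset_mono[OF sub]) simp
    also have "\<dots> \<le> (INF x\<in>\<Delta>1. f x + ereal s * h x)"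
      by (rule INF_mono) (use key in blast)
    also have "\<dots> \<le> supD1" unfolding supD1_def using s0 by (rule SUP_upper)
    finally show "(INF x\<in>M. f x + (\<Sum>t\<in>{t. lam t \<noteq> 0}. ereal (lam t) * ft t x)) \<le> supD1"
      unfolding S_def .
  qed
  show "supD1 \<le> infP"
    unfolding supD1_def infP_def
  proof (rule SUP_least, rule INF_greatest)
    fix s :: real and x assume s: "s \<in> {0..}" and x: "x \<in> {x. \<forall>t\<in>T. ft t x \<le> 0}"
    show "(INF x\<in>\<Delta>1. f x + ereal s * h x) \<le> f x"
    proof (cases "f x = \<infinity>")
      case True then show ?thesis by simp
    next
      case False
      have hx: "h x \<le> 0" unfolding h_def using x by (auto intro: SUP_least)
      then have xD: "x \<in> \<Delta>1" using False unfolding \<Delta>1_def edom_def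
        by (auto simp: less_top[symmetric] intro: le_less_trans)
      have "ereal s * h x \<le> ereal s * 0"
        by (rule ereal_mult_left_mono) (use s hx in auto)
      then have "ereal s * h x \<le> 0" by simp
      then have "f x + ereal s * h x \<le> f x" using add_left_mono[of "ereal s * h x" 0 "f x"] by simp
      then show ?thesis using xD by (meson INF_lower2)
    qed
  qed
qed

end
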